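(* Consider the random walk on $\mathbb{Z}$ starting at $2$ whose steps are independent and equal to $+3$ or $-2$, each with probability $\tfrac12$, stopped at the first time it enters $\{0,1\}$. Let $P_1(t)$ be the probability that the walk enters $\{0,1\}$ for the first time at step $t$ and does so at the site $1$. Then $$\sum_{t\ge 1}P_1(t)\,z^{2\beta(t)}=\sum_{n\ge 0}\frac{z^{6n+4}}{2^{5n+3}(2n+1)}\binom{5n+2}{2n},$$ where $\beta(t)$ denotes the number of $-2$ steps among the $t$ steps. Equivalently, absorption at $1$ can only happen after $2n+1$ steps $+3$ and $3n+2$ steps $-2$ (total $5n+3$ steps) for some $n\ge 0$, and the probability of this is $\dfrac{1}{2^{5n+3}(2n+1)}\binom{5n+2}{2n}$.
   Context: In this generating function $z^2$ marks each backward ($-2$) step. Arriving at $1$ at step $t$ with $f$ forward and $\beta$ backward steps forces $3f-2\beta=-1$. *)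

theory Defs
  imports "HOL-Probability.Probability" "HOL-Computational_Algebra.Formal_Power_Series"
begin

text \<open>Step sequences of length t: each step is +3 or -2. Under the walk's law
  every such sequence has probability 2^(-t), i.e. the uniform distribution.\<close>
definition step_seqs :: "nat \<Rightarrow> int list set" where
  "step_seqs t = {xs. length xs = t \<and> set xs \<subseteq> {3, -2}}"

definition walk_law :: "nat \<Rightarrow> int list pmf" where
  "walk_law t = pmf_of_set (step_seqs t)"

definition pos :: "int list \<Rightarrow> nat \<Rightarrow> int" where
  "pos xs i = 2 + sum_list (take i xs)"

definition absorbed_at_1 :: "nat \<Rightarrow> int list set" where
  "absorbed_at_1 t = {xs \<in> step_seqs t. (\<forall>i<t. pos xs i \<notin> {0, 1}) \<and> pos xs t = 1}"

definition P1 :: "nat \<Rightarrow> real" where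
  "P1 t = measure_pmf.prob (walk_law t) (absorbed_at_1 t)"

definition backsteps :: "int list \<Rightarrow> nat" where
  "backsteps xs = length (filter (\<lambda>s. s = -2) xs)"

definition absorption_gf :: "real fps" where
  "absorption_gf = Abs_fps (\<lambda>m. if even m then
      (\<Sum>t. measure_pmf.prob (walk_law t) {xs \<in> absorbed_at_1 t. backsteps xs = m div 2})
    else 0)"

definition closed_form_gf :: "real fps" where
  "closed_form_gf = Abs_fps (\<lambda>m. if m mod 6 = 4 then
      (let n = m div 6 in real ((5*n+2) choose (2*n)) / (2 ^ (5*n+3) * real (2*n+1)))
    else 0)"

end

theory Submission
  imports Defs
begin


definition S :: "int list \<Rightarrow> nat \<Rightarrow> int" where "S xs i = sum_list (take i xs)"

lemma rot_prefix:
  assumes "length xs = t" "k < t" "j \<le> t" "sum_list xs = -1"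
  shows "sum_list (take j (rotate k xs)) =
    (if j \<le> t - k then S xs (k+j) - S xs k else S xs (j+k-t) - 1 - S xs k)"
proof -
  have r: "rotate k xs = drop k xs @ take k xs" using assms by (simp add: rotate_drop_take)
  have tot: "S xs k + sum_list (drop k xs) = -1"
    using assms(4) by (metis S_def append_take_drop_id sum_list_append)
  show ?thesis
  proof (cases "j \<le> t - k")
    case True
    have "take (k+j) xs = take k xs @ take j (drop k xs)" by (rule take_add)
    then have "S xs (k+j) = S xs k + sum_list (take j (drop k xs))" by (simp add: S_def)
    then show ?thesis using True r assms by simp
  next
    case False
    have "take j (rotate k xs) = drop k xs @ take (j+k-t) xs" using False r assms by simp
    then show ?thesis using False tot by (simp add: S_def)
  qed
qed

definition good :: "int list \<Rightarrow> bool" where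
  "good ys = (\<forall>j<length ys. sum_list (take j ys) \<ge> 0)"

lemma cycle_unique:
  assumes "length xs = t" "sum_list xs = -1" "k1 < k2" "k2 < t"
    "good (rotate k1 xs)" "good (rotate k2 xs)"
  shows False
proof -
  have S0: "S xs 0 = 0" by (simp add: S_def)
  have St: "S xs t = -1" using assms by (simp add: S_def)
  have "sum_list (take (k2-k1) (rotate k1 xs)) \<ge> 0"
    using assms(5) assms unfolding good_def by auto
  moreover have "k2 - k1 \<le> t - k1" "k1 + (k2 - k1) = k2" "k2 - k1 \<le> t" using assms by arith+
  ultimately have a: "S xs k2 \<ge> S xs k1" using rot_prefix[of xs t k1 "k2-k1"] assms by (simp only: if_True)
  have "sum_list (take (t-k2+k1) (rotate k2 xs)) \<ge> 0"
    using assms(6) assms unfolding good_def by auto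
  then have "(if t-k2+k1 \<le> t - k2 then S xs (k2+(t-k2+k1)) - S xs k2 else S xs (t-k2+k1+k2-t) - 1 - S xs k2) \<ge> 0"
    using rot_prefix[of xs t k2 "t-k2+k1"] assms by simp
  then show False
  proof (cases "k1 = 0")
    case True
    then show False using a S0 St assms
      \<open>sum_list (take (t-k2+k1) (rotate k2 xs)) \<ge> 0\<close> rot_prefix[of xs t k2 "t-k2"] by simp
  next
    case False
    then have "\<not> t-k2+k1 \<le> t - k2" "t-k2+k1+k2-t = k1" "t-k2+k1 \<le> t" using assms by arith+
    then show False using a \<open>sum_list (take (t-k2+k1) (rotate k2 xs)) \<ge> 0\<close> rot_prefix[of xs t k2 "t-k2+k1"] assms
      by (simp only: if_False)
  qed
qed

lemma cycle_exists:
  assumes "length xs = t" "sum_list xs = -1" "0 < t"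
  shows "\<exists>k<t. good (rotate k xs)"
proof -
  have S0: "S xs 0 = 0" by (simp add: S_def)
  have St: "S xs t = -1" using assms by (simp add: S_def)
  define M where "M = Min (S xs ` {..<t})"
  have Min_in: "M \<in> S xs ` {..<t}" using assms unfolding M_def by (intro Min_in) auto
  have Min_le: "\<And>i. i < t \<Longrightarrow> M \<le> S xs i" unfolding M_def by (intro Min_le) auto
  define k where "k = (LEAST i. i < t \<and> S xs i = M)"
  have ex: "\<exists>i. i < t \<and> S xs i = M" using Min_in by auto
  have k: "k < t \<and> S xs k = M" unfolding k_def by (rule LeastI_ex[OF ex])
  have kl: "\<And>i. i < k \<Longrightarrow> S xs i > M"
  proof -
    fix i assume "i < k"
    then have "\<not> (i < t \<and> S xs i = M)" unfolding k_def by (rule not_less_Least)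
    then show "S xs i > M" using Min_le[of i] \<open>i<k\<close> k by force
  qed
  have "good (rotate k xs)" unfolding good_def
  proof (intro allI impI)
    fix j assume j: "j < length (rotate k xs)"
    then have j': "j < t" using assms by simp
    show "sum_list (take j (rotate k xs)) \<ge> 0"
    proof (cases "j \<le> t - k")
      case True
      show ?thesis
      proof (cases "k + j < t")
        case True
        then show ?thesis using rot_prefix[of xs t k j] assms k j' Min_le[of "k+j"] \<open>j \<le> t-k\<close> by simp
      next
        case False
        then have "k > 0" using j' by simp
        then have s0: "S xs 0 > M" using kl by blast
        have "k + j = t" using False \<open>j \<le> t-k\<close> k by arith
        then show ?thesis using rot_prefix[of xs t k j] assms k j' \<open>j \<le> t-k\<close> False S0 St s0
          by simp
      qed
    next
      case False
      then have "j + k - t < k" using j' by simp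
      then have "S xs (j+k-t) > M" using kl by blast
      then show ?thesis using rot_prefix[of xs t k j] assms k j' False by simp
    qed
  qed
  then show ?thesis using k by blast
qed



abbreviation c3 :: "int list \<Rightarrow> nat" where "c3 xs \<equiv> length (filter (\<lambda>s. s = 3) xs)"

lemma sum_count:
  assumes "set xs \<subseteq> {3, -2}"
  shows "sum_list xs = 3 * int (c3 xs) - 2 * int (backsteps xs) \<and> length xs = c3 xs + backsteps xs"
  using assms by (induction xs) (auto simp: backsteps_def)

lemma finite_step_seqs: "finite (step_seqs t)"
proof -
  have "step_seqs t = {xs. set xs \<subseteq> {3,-2} \<and> length xs = t}" unfolding step_seqs_def by auto
  then show ?thesis using finite_lists_length_eq[of "{3,-2::int}" t] by simp
qed

lemma card_step_seqs: "card (step_seqs t) = 2 ^ t"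
proof -
  have "step_seqs t = {xs. set xs \<subseteq> {3,-2} \<and> length xs = t}" unfolding step_seqs_def by auto
  moreover have "card {3,-2::int} = 2" by simp
  ultimately show ?thesis using card_lists_length_eq[of "{3,-2::int}" t] by (simp add: numeral_2_eq_2)
qed

lemma sum_rotate: "sum_list (rotate k xs) = sum_list (xs::int list)"
proof -
  let ?m = "k mod length xs"
  have "sum_list (rotate k xs) = sum_list (drop ?m xs) + sum_list (take ?m xs)"
    by (simp add: rotate_drop_take)
  also have "\<dots> = sum_list (take ?m xs @ drop ?m xs)" by (simp only: sum_list_append add.commute)
  also have "\<dots> = sum_list xs" by (simp only: append_take_drop_id)
  finally show ?thesis .
qed

lemma card_c3: "card {xs \<in> step_seqs t. c3 xs = a} = t choose a"
proof -
  let ?L = "{xs \<in> step_seqs t. c3 xs = a}"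
  let ?B = "{B. B \<subseteq> {..<t} \<and> card B = a}"
  define f where "f xs = {i. i < t \<and> xs ! i = (3::int)}" for xs
  define g where "g B = map (\<lambda>i. if i \<in> B then 3 else (-2::int)) [0..<t]" for B
  have "bij_betw f ?L ?B"
  proof (rule bij_betw_byWitness[where f'=g])
    show "\<forall>xs\<in>?L. g (f xs) = xs"
    proof
      fix xs assume xs: "xs \<in> ?L"
      then have l: "length xs = t" and s: "set xs \<subseteq> {3,-2}" by (auto simp: step_seqs_def)
      show "g (f xs) = xs"
      proof (rule nth_equalityI)
        show "length (g (f xs)) = length xs" using l by (simp add: g_def)
        fix i assume "i < length (g (f xs))"
        then have i: "i < t" by (simp add: g_def)
        then have "xs ! i \<in> {3,-2}" using s l nth_mem by blast
        then show "g (f xs) ! i = xs ! i" using i by (auto simp: g_def f_def)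
      qed
    qed
    show "\<forall>B\<in>?B. f (g B) = B" by (auto simp: f_def g_def split: if_splits)
    show "f ` ?L \<subseteq> ?B"
      by (auto simp: f_def step_seqs_def length_filter_conv_card)
    show "g ` ?B \<subseteq> ?L"
    proof
      fix ys assume "ys \<in> g ` ?B"
      then obtain B where B: "B \<subseteq> {..<t}" "card B = a" and ys: "ys = g B" by auto
      have e: "\<And>x. ((if x \<in> B then (3::int) else -2) = 3) = (x \<in> B)" by simp
      have "c3 ys = card {i. i < t \<and> ys ! i = 3}" using ys by (simp add: length_filter_conv_card g_def)
      also have "{i. i < t \<and> ys ! i = 3} = B" using B ys by (auto simp: g_def e)
      finally show "ys \<in> ?L" using B ys by (auto simp: step_seqs_def g_def)
    qed
  qed
  then have "card ?L = card ?B" by (rule bij_betw_same_card)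
  also have "\<dots> = t choose a" using n_subsets[of "{..<t}" a] by simp
  finally show ?thesis .
qed

lemma absorbed_char:
  "absorbed_at_1 t = {xs \<in> step_seqs t. good xs \<and> sum_list xs = -1}"
proof -
  have *: "(\<forall>i<t. pos xs i \<notin> {0, 1}) \<longleftrightarrow> good xs" if xs: "xs \<in> step_seqs t" for xs
  proof
    assume h: "\<forall>i<t. pos xs i \<notin> {0, 1}"
    from xs have l: "length xs = t" and s: "set xs \<subseteq> {3,-2}" by (auto simp: step_seqs_def)
    have "i < t \<Longrightarrow> sum_list (take i xs) \<ge> 0" for i
    proof (induction i)
      case 0 then show ?case by simp
    next
      case (Suc i)
      then have "xs ! i \<in> {3,-2}" using s l nth_mem by (metis Suc_lessD subset_iff)
      moreover have "take (Suc i) xs = take i xs @ [xs ! i]" using Suc l by (simp add: take_Suc_conv_app_nth)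
      moreover have "pos xs (Suc i) \<notin> {0,1}" using h Suc by blast
      ultimately show ?case using Suc by (auto simp: pos_def)
    qed
    then show "good xs" using l by (simp add: good_def)
  next
    assume "good xs"
    then show "\<forall>i<t. pos xs i \<notin> {0, 1}" using xs by (auto simp: good_def pos_def step_seqs_def)
  qed
  show ?thesis unfolding absorbed_at_1_def using *
    by (auto simp: pos_def step_seqs_def)
qed

lemma rot_count:
  assumes "0 < t"
  shows "t * card (absorbed_at_1 t) = card {xs \<in> step_seqs t. sum_list xs = -1}"
proof -
  let ?A = "{xs \<in> step_seqs t. sum_list xs = -1}"
  let ?G = "absorbed_at_1 t"
  let ?P = "SIGMA xs:?A. {k. k < t \<and> good (rotate k xs)}"
  have rot_in: "rotate k xs \<in> ?A" if "xs \<in> ?A" for xs k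
    using that by (auto simp: step_seqs_def sum_rotate)
  have finA: "finite ?A" using finite_step_seqs by simp
  have "card ?P = (\<Sum>xs\<in>?A. card {k. k < t \<and> good (rotate k xs)})"
    using finA by (intro card_SigmaI) auto
  also have "\<dots> = (\<Sum>xs\<in>?A. 1)"
  proof (rule sum.cong[OF refl])
    fix xs assume xs: "xs \<in> ?A"
    then have l: "length xs = t" and s: "sum_list xs = -1" by (auto simp: step_seqs_def)
    obtain k where k: "k < t" "good (rotate k xs)" using cycle_exists[OF l s assms] by blast
    have "{k. k < t \<and> good (rotate k xs)} = {k}"
    proof (auto simp: k)
      fix k' assume "k' < t" "good (rotate k' xs)"
      then show "k' = k" using k cycle_unique[OF l s, of k k'] cycle_unique[OF l s, of k' k]
        by (cases k k' rule: linorder_cases) auto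
    qed
    then show "card {k. k < t \<and> good (rotate k xs)} = 1" by simp
  qed
  also have "\<dots> = card ?A" by simp
  finally have c1: "card ?P = card ?A" .
  have "bij_betw (\<lambda>(xs,k). (rotate k xs, k)) ?P (?G \<times> {..<t})"
  proof (rule bij_betw_byWitness[where f'="\<lambda>(ys,k). (rotate (t - k) ys, k)"])
    show "\<forall>a\<in>?P. (\<lambda>(ys,k). (rotate (t - k) ys, k)) ((\<lambda>(xs,k). (rotate k xs, k)) a) = a"
      by (auto simp: rotate_rotate step_seqs_def)
    show "\<forall>a\<in>?G \<times> {..<t}. (\<lambda>(xs,k). (rotate k xs, k)) ((\<lambda>(ys,k). (rotate (t - k) ys, k)) a) = a"
      by (auto simp: rotate_rotate absorbed_char step_seqs_def)
    show "(\<lambda>(xs,k). (rotate k xs, k)) ` ?P \<subseteq> ?G \<times> {..<t}"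
      using rot_in by (auto simp: absorbed_char)
    show "(\<lambda>(ys,k). (rotate (t - k) ys, k)) ` (?G \<times> {..<t}) \<subseteq> ?P"
      by (auto simp: rotate_rotate absorbed_char step_seqs_def sum_rotate)
  qed
  then have "card ?P = card (?G \<times> {..<t})" by (rule bij_betw_same_card)
  also have "\<dots> = card ?G * t" by (simp add: card_cartesian_product)
  finally show ?thesis using c1 by simp
qed



lemma ar1: 
  assumes "3*int c - 2*int b = -1" 
  shows "(c+b) mod 5 = 3 \<and> c = 2*((c+b) div 5)+1 \<and> b = 3*((c+b) div 5)+2"
proof -
  have e: "3*c+1 = 2*b" using assms by linarith
  then have "odd c" by (metis even_add even_mult_iff odd_numeral odd_one dvd_triv_left)
  then obtain n where c: "c = 2*n+1" by (metis oddE)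
  then have b: "b = 3*n+2" using e by linarith
  have "c + b = 5*n+3" using b c by simp
  then show ?thesis using b c by simp
qed
lemma ar2: 
  assumes "(c+b) mod 5 = 3" "c = 2*((c+b) div 5)+1"
  shows "3*int c - 2*int b = -1"
proof -
  define n where "n = (c+b) div 5"
  have "c + b = 5*n+3" using div_mult_mod_eq[of "c+b" 5] assms(1) n_def by linarith
  moreover have "c = 2*n+1" using assms(2) n_def by simp
  ultimately have "b = 3*n+2" by linarith
  then show ?thesis using \<open>c = 2*n+1\<close> by simp
qed

lemma key:
  assumes "xs \<in> step_seqs t"
  shows "sum_list xs = -1 \<longleftrightarrow> t mod 5 = 3 \<and> c3 xs = 2*(t div 5)+1"
    and "sum_list xs = -1 \<Longrightarrow> backsteps xs = 3*(t div 5)+2"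
proof -
  from assms have l: "length xs = t" and s: "set xs \<subseteq> {3,-2}" by (auto simp: step_seqs_def)
  from sum_count[OF s] l have a: "sum_list xs = 3 * int (c3 xs) - 2 * int (backsteps xs)"
    and b: "t = c3 xs + backsteps xs" by auto
  show "sum_list xs = -1 \<longleftrightarrow> t mod 5 = 3 \<and> c3 xs = 2*(t div 5)+1"
    unfolding a b using ar1[of "c3 xs" "backsteps xs"] ar2[of "c3 xs" "backsteps xs"] by blast
  show "sum_list xs = -1 \<Longrightarrow> backsteps xs = 3*(t div 5)+2"
    unfolding a b using ar1[of "c3 xs" "backsteps xs"] by blast
qed

lemma P1_card: "P1 t = card (absorbed_at_1 t) / 2 ^ t"
proof -
  have ne: "step_seqs t \<noteq> {}"
    by (rule ccontr) (use card_step_seqs[of t] in simp)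
  have "absorbed_at_1 t \<subseteq> step_seqs t" by (auto simp: absorbed_at_1_def)
  then have "step_seqs t \<inter> absorbed_at_1 t = absorbed_at_1 t" by blast
  then show ?thesis unfolding P1_def walk_law_def
    using measure_pmf_of_set[OF ne finite_step_seqs] card_step_seqs[of t] by simp
qed

lemma card_A: "card {xs \<in> step_seqs t. sum_list xs = -1} =
   (if t mod 5 = 3 then t choose (2*(t div 5)+1) else 0)"
proof (cases "t mod 5 = 3")
  case True
  have "{xs \<in> step_seqs t. sum_list xs = -1} = {xs \<in> step_seqs t. c3 xs = 2*(t div 5)+1}"
    using key(1) True by blast
  then show ?thesis using True card_c3 by simp
next
  case False
  have "{xs \<in> step_seqs t. sum_list xs = -1} = {}"
    using key(1) False by blast
  then show ?thesis using False by (metis card.empty)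
qed

lemma card_G: "card (absorbed_at_1 t) * (2*(t div 5)+1) =
   (if t mod 5 = 3 then (5*(t div 5)+2) choose (2*(t div 5)) else 0)"
proof (cases "t = 0")
  case True
  then have "absorbed_at_1 t = {}" by (auto simp: absorbed_char step_seqs_def)
  then show ?thesis using True by simp
next
  case False
  then have r: "t * card (absorbed_at_1 t) = (if t mod 5 = 3 then t choose (2*(t div 5)+1) else 0)"
    using rot_count card_A by simp
  show ?thesis
  proof (cases "t mod 5 = 3")
    case True
    define n where "n = t div 5"
    have t: "t = Suc (5*n+2)" using div_mult_mod_eq[of t 5] True n_def by linarith
    have "Suc (2*n) * (Suc (5*n+2) choose Suc (2*n)) = Suc (5*n+2) * ((5*n+2) choose (2*n))"
      by (rule Suc_times_binomial)
    then have "t * (card (absorbed_at_1 t) * (2*n+1)) = t * ((5*n+2) choose (2*n))"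
      using r True t unfolding n_def[symmetric] by (simp add: algebra_simps)
    then show ?thesis using True False n_def by simp
  next
    case f: False
    then show ?thesis using r False by simp
  qed
qed

lemma P1_formula: "P1 t = (if t mod 5 = 3 then
          (let n = t div 5 in real ((5*n+2) choose (2*n)) / (2 ^ (5*n+3) * real (2*n+1)))
        else 0)"
proof (cases "t mod 5 = 3")
  case True
  define n where "n = t div 5"
  have t: "t = 5*n+3" using div_mult_mod_eq[of t 5] True n_def by linarith
  have "card (absorbed_at_1 t) * (2*n+1) = (5*n+2) choose (2*n)"
    using card_G[of t] True n_def by simp
  then have "real (card (absorbed_at_1 t)) * (2*n+1) = real ((5*n+2) choose (2*n))"
    by (metis of_nat_mult of_nat_1 of_nat_add of_nat_mult of_nat_numeral)
  then have "real (card (absorbed_at_1 t)) = real ((5*n+2) choose (2*n)) / (2*n+1)"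
    by (simp add: field_simps)
  then have "P1 t = real ((5*n+2) choose (2*n)) / (2*n+1) / 2^(5*n+3)"
    unfolding P1_card using t by simp
  also have "\<dots> = real ((5*n+2) choose (2*n)) / (2 ^ (5*n+3) * real (2*n+1))"
    by (simp add: divide_divide_eq_left mult.commute)
  finally show ?thesis using True n_def by (simp add: Let_def)
next
  case False
  then have "card (absorbed_at_1 t) = 0" using card_G[of t] by simp
  then show ?thesis unfolding P1_card using False by simp
qed

lemma third: "xs \<in> absorbed_at_1 t \<Longrightarrow>
          t mod 5 = 3 \<and> backsteps xs = 3 * (t div 5) + 2
          \<and> length (filter (\<lambda>s. s = 3) xs) = 2 * (t div 5) + 1"
  using key by (auto simp: absorbed_char)



lemma coeff_term:
  assumes "even m"
  shows "measure_pmf.prob (walk_law t) {xs \<in> absorbed_at_1 t. backsteps xs = m div 2} =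
    (if m mod 6 = 4 \<and> t = 5*(m div 6)+3 then P1 t else 0)"
proof (cases "t mod 5 = 3 \<and> m div 2 = 3*(t div 5)+2")
  case True
  then have "{xs \<in> absorbed_at_1 t. backsteps xs = m div 2} = absorbed_at_1 t"
    using third by auto
  moreover have "m mod 6 = 4 \<and> t = 5*(m div 6)+3"
  proof -
    define n where "n = t div 5"
    have t: "t = 5*n+3" using div_mult_mod_eq[of t 5] True n_def by linarith
    have "2 * (m div 2) = m" using assms by (rule even_two_times_div_two)
    then have "m = 6*n+4" using True n_def by linarith
    then show ?thesis using t by simp
  qed
  ultimately show ?thesis unfolding P1_def by simp
next
  case False
  then have e: "{xs \<in> absorbed_at_1 t. backsteps xs = m div 2} = {}"
    using third[of _ t] by force
  have "\<not> (m mod 6 = 4 \<and> t = 5*(m div 6)+3)"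
  proof
    assume h: "m mod 6 = 4 \<and> t = 5*(m div 6)+3"
    have "m = 6*(m div 6)+4" using div_mult_mod_eq[of m 6] h by linarith
    then have "m div 2 = 3*(m div 6)+2" by linarith
    then show False using False h by simp
  qed
  then show ?thesis by (subst e) auto
qed

lemma gf: "absorption_gf = closed_form_gf"
proof (rule fps_ext)
  fix m
  show "fps_nth absorption_gf m = fps_nth closed_form_gf m"
  proof (cases "even m")
    case False
    have "m mod 6 \<noteq> 4"
    proof
      assume "m mod 6 = 4"
      then have "m = 6*(m div 6)+4" using div_mult_mod_eq[of m 6] by linarith
      then have "even m" by (metis dvd_add even_mult_iff even_numeral)
      then show False using False by simp
    qed
    then show ?thesis using False by (simp add: absorption_gf_def closed_form_gf_def)
  next
    case True
    show ?thesis
    proof (cases "m mod 6 = 4")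
      case c: True
      define T where "T = 5*(m div 6)+3"
      have "(\<lambda>t. measure_pmf.prob (walk_law t) {xs \<in> absorbed_at_1 t. backsteps xs = m div 2})
        = (\<lambda>t. if t = T then P1 t else 0)"
        using coeff_term[OF True] c T_def by auto
      then have "(\<Sum>t. measure_pmf.prob (walk_law t) {xs \<in> absorbed_at_1 t. backsteps xs = m div 2}) = P1 T"
        using sums_single[of T P1] sums_unique by metis
      moreover have "T mod 5 = 3" "T div 5 = m div 6" using T_def by simp_all
      ultimately show ?thesis using True c
        by (simp add: absorption_gf_def closed_form_gf_def P1_formula Let_def)
    next
      case c: False
      have "(\<lambda>t. measure_pmf.prob (walk_law t) {xs \<in> absorbed_at_1 t. backsteps xs = m div 2})
        = (\<lambda>t. 0)"
        using coeff_term[OF True] c by auto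
      then show ?thesis using True c
        by (simp add: absorption_gf_def closed_form_gf_def)
    qed
  qed
qed

theorem mainTheorem4:
  shows "absorption_gf = closed_form_gf
    \<and> (\<forall>t. P1 t = (if t mod 5 = 3 then
          (let n = t div 5 in real ((5*n+2) choose (2*n)) / (2 ^ (5*n+3) * real (2*n+1)))
        else 0))
    \<and> (\<forall>t xs. xs \<in> absorbed_at_1 t \<longrightarrow>
          t mod 5 = 3 \<and> backsteps xs = 3 * (t div 5) + 2
          \<and> length (filter (\<lambda>s. s = 3) xs) = 2 * (t div 5) + 1)"
  using gf P1_formula third by blast

end
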